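(* Let $G=(V,E)$ be a graph with a partition of its vertex set into sets $V_1,\dots,V_t$ ($t$ a positive integer), each $V_i$ being a set of pairwise true twins. Let $m_i=|V_i|$ for $1\le i\le t$. Let $\Gamma$ be a finite Abelian group of order $m$ with $\sum_{i=1}^t m_i=m-1$. If $\Gamma^*$ can be partitioned into pairwise disjoint sets $S_1,\dots,S_t$ with $|S_i|=m_i$ and $\sum_{s\in S_i}s=0$ for every $i$, then $G$ has a $\Gamma^*$-distance anti-magic labeling.
   Context: $\Gamma^*=\Gamma\setminus\{0\}$. In a graph $G=(V,E)$, a set $M\subseteq V$ is a module if $N(x)\setminus M=N(y)\setminus M$ for all $x,y\in M$. Two vertices $x,y$ are twins if $\{x,y\}$ is a module; they are false twins if moreover $\{x,y\}\notin E$ and true twins if $\{x,y\}\in E$ (every vertex is considered a false and true twin of itself). A $\Gamma^*$-distance anti-magic labeling of $G$ (with $|V|=|\Gamma|-1$) is a bijection $\ell\colon V\to\Gamma^*$ such that the weights $w(v)=\sum_{u\in N(v)}\ell(u)$, $v\in V$, are pairwise distinct. *)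

theory Defs
  imports Main
begin

definition simple_graph :: "'v set \<Rightarrow> ('v \<Rightarrow> 'v \<Rightarrow> bool) \<Rightarrow> bool" where
  "simple_graph V adj \<longleftrightarrow> finite V \<and>
     (\<forall>x y. adj x y \<longrightarrow> x \<in> V \<and> y \<in> V) \<and>
     (\<forall>x y. adj x y \<longrightarrow> adj y x) \<and> (\<forall>x. \<not> adj x x)"

definition nbhd :: "'v set \<Rightarrow> ('v \<Rightarrow> 'v \<Rightarrow> bool) \<Rightarrow> 'v \<Rightarrow> 'v set" where
  "nbhd V adj v = {u \<in> V. adj v u}"

definition is_module :: "'v set \<Rightarrow> ('v \<Rightarrow> 'v \<Rightarrow> bool) \<Rightarrow> 'v set \<Rightarrow> bool" where
  "is_module V adj M \<longleftrightarrow> M \<subseteq> V \<and>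
     (\<forall>x\<in>M. \<forall>y\<in>M. nbhd V adj x - M = nbhd V adj y - M)"

definition true_twins :: "'v set \<Rightarrow> ('v \<Rightarrow> 'v \<Rightarrow> bool) \<Rightarrow> 'v \<Rightarrow> 'v \<Rightarrow> bool" where
  "true_twins V adj x y \<longleftrightarrow> is_module V adj {x, y} \<and> (x = y \<or> adj x y)"

definition dist_antimagic_labeling ::
  "'v set \<Rightarrow> ('v \<Rightarrow> 'v \<Rightarrow> bool) \<Rightarrow> ('v \<Rightarrow> 'g::{ab_group_add,finite}) \<Rightarrow> bool" where
  "dist_antimagic_labeling V adj l \<longleftrightarrow>
     bij_betw l V (UNIV - {0}) \<and>
     inj_on (\<lambda>v. \<Sum>u\<in>nbhd V adj v. l u) V"

end

theory Submission
  imports Defs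
begin

theorem proposition4p8:
  fixes V :: "'v set" and adj :: "'v \<Rightarrow> 'v \<Rightarrow> bool"
    and t :: nat and P :: "nat \<Rightarrow> 'v set" and S :: "nat \<Rightarrow> 'g::{ab_group_add,finite} set"
  assumes graph: "simple_graph V adj"
    and t_pos: "t \<ge> 1"
    and P_nonempty: "\<forall>i\<in>{1..t}. P i \<noteq> {}"
    and P_disj: "\<forall>i\<in>{1..t}. \<forall>j\<in>{1..t}. i \<noteq> j \<longrightarrow> P i \<inter> P j = {}"
    and P_cover: "(\<Union>i\<in>{1..t}. P i) = V"
    and P_twins: "\<forall>i\<in>{1..t}. \<forall>x\<in>P i. \<forall>y\<in>P i. true_twins V adj x y"
    and order: "(\<Sum>i=1..t. card (P i)) = card (UNIV :: 'g set) - 1"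
    and S_disj: "\<forall>i\<in>{1..t}. \<forall>j\<in>{1..t}. i \<noteq> j \<longrightarrow> S i \<inter> S j = {}"
    and S_cover: "(\<Union>i\<in>{1..t}. S i) = UNIV - {0}"
    and S_card: "\<forall>i\<in>{1..t}. card (S i) = card (P i)"
    and S_sum: "\<forall>i\<in>{1..t}. (\<Sum>s\<in>S i. s) = 0"
  shows "\<exists>l :: 'v \<Rightarrow> 'g. dist_antimagic_labeling V adj l"
proof -
  have finV: "finite V" using graph by (simp add: simple_graph_def)
  have finP: "finite (P i)" if "i \<in> {1..t}" for i
    using P_cover that finV by (metis UN_upper finite_subset)
  have "\<forall>i. \<exists>f. i \<in> {1..t} \<longrightarrow> bij_betw f (P i) (S i)"
  proof
    fix i show "\<exists>f. i \<in> {1..t} \<longrightarrow> bij_betw f (P i) (S i)"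
    proof (cases "i \<in> {1..t}")
      case True
      have "card (P i) = card (S i)" using S_card True by simp
      then obtain f where "bij_betw f (P i) (S i)"
        using finP[OF True] finite[of "S i"] by (metis finite_same_card_bij)
      then show ?thesis by blast
    qed auto
  qed
  then obtain f where f: "\<And>i. i \<in> {1..t} \<Longrightarrow> bij_betw (f i) (P i) (S i)" by metis
  define idx where "idx v = (SOME i. i \<in> {1..t} \<and> v \<in> P i)" for v
  define l where "l v = f (idx v) v" for v
  have idx: "idx v = i" if "i \<in> {1..t}" "v \<in> P i" for v i
  proof -
    have "idx v \<in> {1..t} \<and> v \<in> P (idx v)"
      unfolding idx_def by (rule someI[of _ i]) (use that in auto)
    then show ?thesis using P_disj that by blast
  qed
  have lP: "bij_betw l (P i) (S i)" if "i \<in> {1..t}" for i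
    using f[OF that] by (rule bij_betw_cong[THEN iffD1, rotated]) (simp add: l_def idx[OF that])
  have inV: "\<exists>i\<in>{1..t}. v \<in> P i" if "v \<in> V" for v using P_cover that by blast
  have injl: "inj_on l V"
  proof (rule inj_onI)
    fix x y assume xy: "x \<in> V" "y \<in> V" "l x = l y"
    obtain i where i: "i \<in> {1..t}" "x \<in> P i" using inV xy(1) by blast
    obtain j where j: "j \<in> {1..t}" "y \<in> P j" using inV xy(2) by blast
    have a: "l x \<in> S i" using bij_betwE[OF lP[OF i(1)]] i(2) by blast
    have b: "l y \<in> S j" using bij_betwE[OF lP[OF j(1)]] j(2) by blast
    have c: "i \<noteq> j \<Longrightarrow> S i \<inter> S j = {}" using S_disj i(1) j(1) by blast
    have "i = j" using a b c xy(3) by auto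
    then show "x = y" using inj_onD[OF bij_betw_imp_inj_on[OF lP[OF i(1)]] xy(3) i(2)] j(2) by simp
  qed
  have imgl: "l ` V = UNIV - {0}"
  proof -
    have "l ` V = (\<Union>i\<in>{1..t}. l ` P i)" unfolding P_cover[symmetric] image_UN ..
    also have "\<dots> = (\<Union>i\<in>{1..t}. S i)" using bij_betw_imp_surj_on[OF lP] by simp
    finally show ?thesis using S_cover by simp
  qed
  have adjV: "adj x y \<Longrightarrow> x \<in> V \<and> y \<in> V" "adj x y \<Longrightarrow> adj y x" "\<not> adj x x" for x y
    using graph unfolding simple_graph_def by blast+
  have key: "y \<in> insert v (nbhd V adj v)"
    if j: "j \<in> {1..t}" and u: "u \<in> P j" "u \<in> insert v (nbhd V adj v)" and y: "y \<in> P j"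
      and v: "v \<in> V" for v u y j
  proof (cases "y = v")
    case True then show ?thesis by simp
  next
    case False
    have yV: "y \<in> V" using P_cover j y by blast
    have tw: "true_twins V adj u y" using P_twins j u(1) y by blast
    show ?thesis
    proof (cases "u = v")
      case True
      then have "adj v y" using tw False unfolding true_twins_def by blast
      then show ?thesis using yV unfolding nbhd_def by blast
    next
      case uv: False
      then have avu: "adj v u" using u(2) unfolding nbhd_def by blast
      have "is_module V adj {u, y}" using tw unfolding true_twins_def by blast
      then have "nbhd V adj u - {u, y} = nbhd V adj y - {u, y}" unfolding is_module_def by blast
      moreover have "v \<in> nbhd V adj u - {u, y}"
        using adjV(2)[OF avu] v uv False unfolding nbhd_def by blast
      ultimately have "v \<in> nbhd V adj y" by blast
      then have "adj y v" unfolding nbhd_def by blast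
      then show ?thesis using adjV(2)[of y v] yV unfolding nbhd_def by blast
    qed
  qed
  have w: "(\<Sum>u\<in>nbhd V adj v. l u) = - l v" if v: "v \<in> V" for v
  proof -
    define K where "K = {j \<in> {1..t}. P j \<inter> insert v (nbhd V adj v) \<noteq> {}}"
    have Kt: "K \<subseteq> {1..t}" by (auto simp: K_def)
    have eq: "insert v (nbhd V adj v) = (\<Union>j\<in>K. P j)"
    proof
      show "insert v (nbhd V adj v) \<subseteq> (\<Union>j\<in>K. P j)"
      proof
        fix x assume x: "x \<in> insert v (nbhd V adj v)"
        then have "x \<in> V" using v by (auto simp: nbhd_def)
        then obtain j where "j \<in> {1..t}" "x \<in> P j" using inV by blast
        then show "x \<in> (\<Union>j\<in>K. P j)" using x by (auto simp: K_def)
      qed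
      show "(\<Union>j\<in>K. P j) \<subseteq> insert v (nbhd V adj v)"
      proof
        fix x assume "x \<in> (\<Union>j\<in>K. P j)"
        then obtain j where j: "j \<in> K" "x \<in> P j" by blast
        then obtain u where "u \<in> P j" "u \<in> insert v (nbhd V adj v)" and jt: "j \<in> {1..t}"
          unfolding K_def by blast
        then show "x \<in> insert v (nbhd V adj v)" using key[OF jt _ _ j(2) v] by blast
      qed
    qed
    have "(\<Sum>u\<in>insert v (nbhd V adj v). l u) = (\<Sum>j\<in>K. \<Sum>u\<in>P j. l u)"
      unfolding eq
    proof (rule sum.UNION_disjoint)
      show "finite K" using Kt finite_subset by blast
      show "\<forall>j\<in>K. finite (P j)" using Kt finP by blast
      show "\<forall>i\<in>K. \<forall>j\<in>K. i \<noteq> j \<longrightarrow> P i \<inter> P j = {}" using Kt P_disj by blast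
    qed
    also have "\<dots> = (\<Sum>j\<in>K. \<Sum>s\<in>S j. s)"
    proof (rule sum.cong[OF refl])
      fix j assume "j \<in> K"
      then have "j \<in> {1..t}" using Kt by blast
      then show "(\<Sum>u\<in>P j. l u) = (\<Sum>s\<in>S j. s)"
        using sum.reindex_bij_betw[OF lP, of j "\<lambda>s. s"] by simp
    qed
    also have "\<dots> = 0" using S_sum Kt by (auto intro: sum.neutral)
    finally have "(\<Sum>u\<in>insert v (nbhd V adj v). l u) = 0" .
    moreover have "v \<notin> nbhd V adj v" using adjV(3)[of v] by (simp add: nbhd_def)
    moreover have "finite (nbhd V adj v)" using finV by (auto simp: nbhd_def)
    ultimately have "l v + (\<Sum>u\<in>nbhd V adj v. l u) = 0" by simp
    then show ?thesis by (simp add: add_eq_0_iff)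
  qed
  have "inj_on (\<lambda>v. \<Sum>u\<in>nbhd V adj v. l u) V"
    using injl by (auto simp: inj_on_def w)
  then show ?thesis unfolding dist_antimagic_labeling_def bij_betw_def using injl imgl by blast
qed

end
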